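(* Let $(X,d)$ be a metric space, $0<\rho<1$, and $\mu:X^k\to X$ a coordinatewise $\rho$-contractive $k$-mean. Then $\mu$ is weakly $\beta$-contractive.
   Context: A $k$-mean is a map $\mu:X^k\to X$ with $\mu(x,\ldots,x)=x$. It is coordinatewise $\rho$-contractive if $d(\mu(\mathbf{x}),\mu(\mathbf{y}))\le\rho\,d(x_j,y_j)$ whenever $\mathbf{x},\mathbf{y}\in X^k$ differ only in the $j$-th coordinate. The barycentric operator $\beta:X^{k+1}\to X^{k+1}$ is $\beta(\mathbf{x})_j=\mu(x_1,\ldots,x_{j-1},x_{j+1},\ldots,x_{k+1})$. For $\mathbf{x}\in X^{k+1}$, $\Delta(\mathbf{x})=\max_{i,j}d(x_i,x_j)$. $\mu$ is weakly $\beta$-contractive if $\lim_n\Delta(\beta^n(\mathbf{x}))=0$ for every $\mathbf{x}\in X^{k+1}$. *)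

theory Defs
  imports "HOL-Analysis.Analysis"
begin

text \<open>The metric space X is the carrier type 'a of class metric_space.
  Points of X^k are lists of length k (coordinates indexed 0..k-1).\<close>

definition is_kmean :: "nat \<Rightarrow> ('a list \<Rightarrow> 'a) \<Rightarrow> bool" where
  "is_kmean k \<mu> \<longleftrightarrow> (\<forall>x. \<mu> (replicate k x) = x)"

definition coordwise_contractive :: "nat \<Rightarrow> real \<Rightarrow> ('a::metric_space list \<Rightarrow> 'a) \<Rightarrow> bool" where
  "coordwise_contractive k \<rho> \<mu> \<longleftrightarrow>
     (\<forall>xs ys j. length xs = k \<longrightarrow> length ys = k \<longrightarrow> j < k \<longrightarrow>
        (\<forall>i<k. i \<noteq> j \<longrightarrow> xs ! i = ys ! i) \<longrightarrow>
        dist (\<mu> xs) (\<mu> ys) \<le> \<rho> * dist (xs ! j) (ys ! j))"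

definition barycentric :: "('a list \<Rightarrow> 'a) \<Rightarrow> 'a list \<Rightarrow> 'a list" where
  "barycentric \<mu> xs = map (\<lambda>j. \<mu> (take j xs @ drop (Suc j) xs)) [0..<length xs]"

definition Delta :: "'a::metric_space list \<Rightarrow> real" where
  "Delta xs = Max {dist (xs ! i) (xs ! j) | i j. i < length xs \<and> j < length xs}"

definition weakly_beta_contractive :: "nat \<Rightarrow> ('a::metric_space list \<Rightarrow> 'a) \<Rightarrow> bool" where
  "weakly_beta_contractive k \<mu> \<longleftrightarrow>
     (\<forall>xs. length xs = Suc k \<longrightarrow> (\<lambda>n. Delta ((barycentric \<mu> ^^ n) xs)) \<longlonglongrightarrow> 0)"

end

theory Submission
  imports Defs
begin

lemma bary_length[simp]: "length (barycentric \<mu> xs) = length xs"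
  by (simp add: barycentric_def)

lemma bary_nth: "j < length xs \<Longrightarrow> barycentric \<mu> xs ! j = \<mu> (take j xs @ drop (Suc j) xs)"
  by (simp add: barycentric_def)

lemma remove_nth:
  assumes "j < length xs" "l < length xs - 1"
  shows "(take j xs @ drop (Suc j) xs) ! l = (if l < j then xs ! l else xs ! Suc l)"
  using assms by (auto simp: nth_append min_def)

lemma bary_adj:
  fixes \<mu> :: "'a::metric_space list \<Rightarrow> 'a"
  assumes c: "coordwise_contractive k \<rho> \<mu>" and len: "length xs = Suc k" and i: "i < k"
  shows "dist (barycentric \<mu> xs ! i) (barycentric \<mu> xs ! Suc i) \<le> \<rho> * dist (xs ! i) (xs ! Suc i)"
proof -
  define ys where "ys = take (Suc i) xs @ drop (Suc (Suc i)) xs"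
  define zs where "zs = take i xs @ drop (Suc i) xs"
  have ly: "length ys = k" and lz: "length zs = k" using len i by (auto simp: ys_def zs_def)
  have eq: "\<forall>l<k. l \<noteq> i \<longrightarrow> ys ! l = zs ! l"
  proof (intro allI impI)
    fix l assume "l < k" "l \<noteq> i"
    then show "ys ! l = zs ! l" unfolding ys_def zs_def
      using remove_nth[of i xs l] remove_nth[of "Suc i" xs l] len i by auto
  qed
  have yi: "ys ! i = xs ! i" unfolding ys_def using remove_nth[of "Suc i" xs i] len i by auto
  have zi: "zs ! i = xs ! Suc i" unfolding zs_def using remove_nth[of i xs i] len i by auto
  have "dist (\<mu> ys) (\<mu> zs) \<le> \<rho> * dist (ys ! i) (zs ! i)"
    using c ly lz i eq unfolding coordwise_contractive_def by blast
  moreover have "barycentric \<mu> xs ! i = \<mu> zs" "barycentric \<mu> xs ! Suc i = \<mu> ys"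
    using bary_nth[of i xs \<mu>] bary_nth[of "Suc i" xs \<mu>] len i by (auto simp: ys_def zs_def)
  ultimately show ?thesis using yi zi by (simp add: dist_commute)
qed

lemma Delta_set_finite: "finite {dist (xs ! i) (xs ! j) | i j. i < length xs \<and> j < length xs}"
proof -
  have "{dist (xs ! i) (xs ! j) | i j. i < length xs \<and> j < length xs}
        = (\<lambda>(i,j). dist (xs ! i) (xs ! j)) ` ({..<length xs} \<times> {..<length xs})" by auto
  then show ?thesis by simp
qed

lemma Delta_ge: "i < length xs \<Longrightarrow> j < length xs \<Longrightarrow> dist (xs ! i) (xs ! j) \<le> Delta xs"
  unfolding Delta_def by (rule Max_ge[OF Delta_set_finite]) blast

lemma Delta_le:
  assumes "xs \<noteq> []" "\<And>i j. i < length xs \<Longrightarrow> j < length xs \<Longrightarrow> dist (xs ! i) (xs ! j) \<le> B"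
  shows "Delta xs \<le> B"
  unfolding Delta_def
  using assms by (subst Max_le_iff[OF Delta_set_finite]) auto

lemma chain_bound:
  fixes xs :: "'a::metric_space list"
  assumes "\<forall>i. Suc i < length xs \<longrightarrow> dist (xs ! i) (xs ! Suc i) \<le> e"
  shows "i \<le> j \<Longrightarrow> j < length xs \<Longrightarrow> dist (xs ! i) (xs ! j) \<le> real (j - i) * e"
proof (induction j)
  case 0 then show ?case by simp
next
  case (Suc j)
  show ?case
  proof (cases "i = Suc j")
    case True then show ?thesis by simp
  next
    case False
    then have ij: "i \<le> j" using Suc by simp
    have "dist (xs ! i) (xs ! Suc j) \<le> dist (xs ! i) (xs ! j) + dist (xs ! j) (xs ! Suc j)"
      by (rule dist_triangle)
    also have "\<dots> \<le> real (j - i) * e + e" using Suc ij assms by (intro add_mono) auto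
    also have "\<dots> = real (Suc j - i) * e" using ij by (simp add: Suc_diff_le algebra_simps)
    finally show ?thesis .
  qed
qed

theorem lemma3p8:
  fixes \<mu> :: "'a::metric_space list \<Rightarrow> 'a" and k :: nat and \<rho> :: real
  assumes "0 < \<rho>" and "\<rho> < 1"
    and "is_kmean k \<mu>"
    and "coordwise_contractive k \<rho> \<mu>"
  shows "weakly_beta_contractive k \<mu>"
  unfolding weakly_beta_contractive_def
proof (intro allI impI)
  fix xs :: "'a list" assume len: "length xs = Suc k"
  define D where "D = Delta xs"
  have lenn: "length ((barycentric \<mu> ^^ n) xs) = Suc k" for n
    by (induction n) (auto simp: len)
  have adj: "\<forall>i<k. dist ((barycentric \<mu> ^^ n) xs ! i) ((barycentric \<mu> ^^ n) xs ! Suc i) \<le> \<rho> ^ n * D" for n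
  proof (induction n)
    case 0 then show ?case using Delta_ge[of _ xs] len by (auto simp: D_def)
  next
    case (Suc n)
    show ?case
    proof (intro allI impI)
      fix i assume i: "i < k"
      have "dist ((barycentric \<mu> ^^ Suc n) xs ! i) ((barycentric \<mu> ^^ Suc n) xs ! Suc i)
          \<le> \<rho> * dist ((barycentric \<mu> ^^ n) xs ! i) ((barycentric \<mu> ^^ n) xs ! Suc i)"
        using bary_adj[OF assms(4) lenn i] by simp
      also have "\<dots> \<le> \<rho> * (\<rho> ^ n * D)" using Suc i assms(1) by (intro mult_left_mono) auto
      finally show "dist ((barycentric \<mu> ^^ Suc n) xs ! i) ((barycentric \<mu> ^^ Suc n) xs ! Suc i) \<le> \<rho> ^ Suc n * D"
        by simp
    qed
  qed
  have D0: "0 \<le> D" using Delta_ge[of 0 xs 0] len by (simp add: D_def)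
  have up: "Delta ((barycentric \<mu> ^^ n) xs) \<le> real k * (\<rho> ^ n * D)" for n
  proof (rule Delta_le)
    show "(barycentric \<mu> ^^ n) xs \<noteq> []" using lenn[of n] by auto
  next
    fix i j assume i: "i < length ((barycentric \<mu> ^^ n) xs)" and j: "j < length ((barycentric \<mu> ^^ n) xs)"
    let ?y = "(barycentric \<mu> ^^ n) xs"
    have a: "\<forall>i. Suc i < length ?y \<longrightarrow> dist (?y ! i) (?y ! Suc i) \<le> \<rho> ^ n * D"
      using adj[of n] lenn[of n] by auto
    have e0: "0 \<le> \<rho> ^ n * D" using D0 assms(1) by simp
    show "dist (?y ! i) (?y ! j) \<le> real k * (\<rho> ^ n * D)"
    proof (cases "i \<le> j")
      case True
      have "dist (?y ! i) (?y ! j) \<le> real (j - i) * (\<rho> ^ n * D)" using chain_bound[OF a True j] .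
      also have "\<dots> \<le> real k * (\<rho> ^ n * D)" using e0 j lenn[of n] by (intro mult_right_mono) auto
      finally show ?thesis .
    next
      case False
      have "dist (?y ! i) (?y ! j) = dist (?y ! j) (?y ! i)" by (simp add: dist_commute)
      also have "\<dots> \<le> real (i - j) * (\<rho> ^ n * D)" using chain_bound[OF a _ i] False by simp
      also have "\<dots> \<le> real k * (\<rho> ^ n * D)" using e0 i lenn[of n] by (intro mult_right_mono) auto
      finally show ?thesis .
    qed
  qed
  have low: "0 \<le> Delta ((barycentric \<mu> ^^ n) xs)" for n
    using Delta_ge[of 0 "(barycentric \<mu> ^^ n) xs" 0] lenn[of n] by simp
  have "(\<lambda>n. real k * (\<rho> ^ n * D)) \<longlonglongrightarrow> real k * (0 * D)"
    by (intro tendsto_intros LIMSEQ_power_zero) (use assms(1,2) in auto)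
  then have "(\<lambda>n. real k * (\<rho> ^ n * D)) \<longlonglongrightarrow> 0" by simp
  then show "(\<lambda>n. Delta ((barycentric \<mu> ^^ n) xs)) \<longlonglongrightarrow> 0"
    using real_tendsto_sandwich[where f="\<lambda>_. 0" and h="\<lambda>n. real k * (\<rho> ^ n * D)"
        and g="\<lambda>n. Delta ((barycentric \<mu> ^^ n) xs)" and net=sequentially and c=0]
      low up by (simp add: always_eventually)
qed

end
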